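(* Let $\mathfrak{g}$ be a nilpotent real Lie algebra of dimension $6$, and let $\mathfrak{g}^*=V_1\oplus V_2$ be a coherent splitting of $\mathfrak{g}$. Then $V_1\subset\ker d$ and the derived length of $\mathfrak{g}$ is $1$ or $2$.
   Context: $d\colon\mathfrak{g}^*\to\Lambda^2\mathfrak{g}^*$ is the Chevalley–Eilenberg differential, $d\alpha(X,Y)=-\alpha([X,Y])$, extended to a derivation of $\Lambda^*\mathfrak{g}^*$. A coherent splitting is a decomposition $\mathfrak{g}^*=V_1\oplus V_2$ with $\dim V_1=2$ such that, with $\Lambda^{p,q}=\Lambda^pV_1\otimes\Lambda^qV_2$, $d(\Lambda^{p,q})\subset\Lambda^{p+1,q}+\Lambda^{p+2,q-1}$ for all $p,q$. The derived length is the least $n$ with $\mathcal{D}^n(\mathfrak{g})=0$, where $\mathcal{D}(\mathfrak{g})=[\mathfrak{g},\mathfrak{g}]$. *)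

theory Defs
  imports "HOL-Analysis.Analysis" "HOL-Combinatorics.Permutations"
begin

definition lie_algebra :: "('a::real_vector \<Rightarrow> 'a \<Rightarrow> 'a) \<Rightarrow> bool" where
  "lie_algebra br \<longleftrightarrow> bilinear br \<and> (\<forall>x. br x x = 0) \<and>
     (\<forall>x y z. br x (br y z) + br y (br z x) + br z (br x y) = 0)"

fun lower_central :: "('a::real_vector \<Rightarrow> 'a \<Rightarrow> 'a) \<Rightarrow> nat \<Rightarrow> 'a set" where
  "lower_central br 0 = UNIV"
| "lower_central br (Suc n) = span {br x y | x y. y \<in> lower_central br n}"

definition nilpotent_lie :: "('a::real_vector \<Rightarrow> 'a \<Rightarrow> 'a) \<Rightarrow> bool" where
  "nilpotent_lie br \<longleftrightarrow> (\<exists>n. lower_central br n = {0})"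

fun derived_series :: "('a::real_vector \<Rightarrow> 'a \<Rightarrow> 'a) \<Rightarrow> nat \<Rightarrow> 'a set" where
  "derived_series br 0 = UNIV"
| "derived_series br (Suc n) =
     span {br x y | x y. x \<in> derived_series br n \<and> y \<in> derived_series br n}"

definition derived_length :: "('a::real_vector \<Rightarrow> 'a \<Rightarrow> 'a) \<Rightarrow> nat" where
  "derived_length br = (LEAST n. derived_series br n = {0})"

definition fspan :: "('b \<Rightarrow> real) set \<Rightarrow> ('b \<Rightarrow> real) set" where
  "fspan S = {f. \<exists>n (c::nat \<Rightarrow> real) g. (\<forall>i<n. g i \<in> S) \<and>
                    f = (\<lambda>x. \<Sum>i<n. c i * g i x)}"

definition dual_space :: "('a::real_vector \<Rightarrow> real) set" where
  "dual_space = {f. linear f}"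

definition dual_subspace :: "('a::real_vector \<Rightarrow> real) set \<Rightarrow> bool" where
  "dual_subspace V \<longleftrightarrow> V \<subseteq> dual_space \<and> fspan V = V"

definition dual_dim2 :: "('a::real_vector \<Rightarrow> real) set \<Rightarrow> bool" where
  "dual_dim2 V \<longleftrightarrow> (\<exists>\<alpha> \<beta>. V = fspan {\<alpha>, \<beta>} \<and>
      (\<forall>a b. (\<lambda>x. a * \<alpha> x + b * \<beta> x) = (\<lambda>x. 0) \<longrightarrow> a = 0 \<and> b = 0))"

definition dual_direct_sum :: "('a::real_vector \<Rightarrow> real) set \<Rightarrow> ('a \<Rightarrow> real) set \<Rightarrow> bool" where
  "dual_direct_sum V1 V2 \<longleftrightarrow> dual_subspace V1 \<and> dual_subspace V2 \<and>
     V1 \<inter> V2 = {\<lambda>x. 0} \<and>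
     (\<forall>f\<in>dual_space. \<exists>a\<in>V1. \<exists>b\<in>V2. f = (\<lambda>x. a x + b x))"

text \<open>A k-form on g is represented as a function of a sequence of vectors
  X :: nat \<Rightarrow> g, of which only X 0, ..., X (k-1) are used.
  Wedge product of 1-forms alpha_1 ... alpha_k (determinant convention):
  (alpha_1 \<and> ... \<and> alpha_k)(X_0,...,X_(k-1)) = det (alpha_i (X_j)).\<close>
definition wedge :: "('a \<Rightarrow> real) list \<Rightarrow> (nat \<Rightarrow> 'a) \<Rightarrow> real" where
  "wedge as X = (\<Sum>\<sigma> | \<sigma> permutes {..<length as}.
        of_int (sign \<sigma>) * (\<Prod>i<length as. (as ! i) (X (\<sigma> i))))"

text \<open>Lambda^{p,q} = Lambda^p V1 \<otimes> Lambda^q V2, as a subspace of Lambda^{p+q} g^*.\<close>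
definition bideg :: "('a \<Rightarrow> real) set \<Rightarrow> ('a \<Rightarrow> real) set \<Rightarrow> nat \<Rightarrow> nat
                      \<Rightarrow> ((nat \<Rightarrow> 'a) \<Rightarrow> real) set" where
  "bideg V1 V2 p q = fspan {wedge (as @ bs) | as bs.
      length as = p \<and> set as \<subseteq> V1 \<and> length bs = q \<and> set bs \<subseteq> V2}"

text \<open>Index of the l-th element (0-based) of {0..k} - {i,j}, for i < j.\<close>
definition skip2 :: "nat \<Rightarrow> nat \<Rightarrow> nat \<Rightarrow> nat" where
  "skip2 i j l = (if l < i then l else if l + 1 < j then l + 1 else l + 2)"

text \<open>Chevalley--Eilenberg differential on k-forms (trivial coefficients):
  d omega(X_0,...,X_k) = sum_{i<j} (-1)^(i+j) omega([X_i,X_j], X_0,..^i..^j..,X_k).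
  For k = 1 this gives d alpha(X,Y) = - alpha([X,Y]), and it is the
  derivation extension to the exterior algebra.\<close>
definition CE_d :: "('a \<Rightarrow> 'a \<Rightarrow> 'a) \<Rightarrow> nat \<Rightarrow> ((nat \<Rightarrow> 'a) \<Rightarrow> real)
                     \<Rightarrow> ((nat \<Rightarrow> 'a) \<Rightarrow> real)" where
  "CE_d br k \<omega> X = (\<Sum>i<k+1. \<Sum>j\<in>{i<..k}.
       (-1) ^ (i + j) * \<omega> (\<lambda>m. case m of 0 \<Rightarrow> br (X i) (X j)
                                      | Suc l \<Rightarrow> X (skip2 i j l)))"

definition one_form :: "('a \<Rightarrow> real) \<Rightarrow> (nat \<Rightarrow> 'a) \<Rightarrow> real" where
  "one_form \<alpha> X = \<alpha> (X 0)"

definition coherent_splitting ::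
  "('a::real_vector \<Rightarrow> 'a \<Rightarrow> 'a) \<Rightarrow> ('a \<Rightarrow> real) set \<Rightarrow> ('a \<Rightarrow> real) set \<Rightarrow> bool" where
  "coherent_splitting br V1 V2 \<longleftrightarrow> dual_direct_sum V1 V2 \<and> dual_dim2 V1 \<and>
     (\<forall>p q. \<forall>\<omega>\<in>bideg V1 V2 p q.
        \<exists>a\<in>bideg V1 V2 (p+1) q.
        \<exists>b\<in>(if q = 0 then {\<lambda>X. 0} else bideg V1 V2 (p+2) (q-1)).
          CE_d br (p+q) \<omega> = (\<lambda>X. a X + b X))"

end

theory Submission
  imports Defs
begin


lemma wedge1: "wedge [a] X = a (X 0)"
proof -
  have "{..<Suc 0} = {0::nat}" by auto
  then show ?thesis unfolding wedge_def by simp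
qed

lemma wedge2: "wedge [a, b] X = a (X 0) * b (X 1) - a (X 1) * b (X 0)"
proof -
  have e: "{..<2::nat} = insert 0 {1}" by auto
  have "wedge [a,b] X = (\<Sum>\<sigma> | \<sigma> permutes insert 0 {1::nat}.
        of_int (sign \<sigma>) * (\<Prod>i<2. ([a,b] ! i) (X (\<sigma> i))))"
  proof -
    have l: "length [a,b] = 2" by simp
    show ?thesis unfolding wedge_def l e ..
  qed
  also have "\<dots> = (\<Sum>c\<in>insert 0 {1::nat}. \<Sum>q\<in>{p. p permutes {1::nat}}.
        of_int (sign (Transposition.transpose 0 c \<circ> q)) * (\<Prod>i<2. ([a,b] ! i) (X ((Transposition.transpose 0 c \<circ> q) i))))"
    by (rule sum_over_permutations_insert) auto
  also have "\<dots> = a (X 0) * b (X 1) - a (X 1) * b (X 0)"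
    by (simp add: sign_swap_id numeral_2_eq_2 lessThan_Suc)
  finally show ?thesis .
qed


lemma in_fspan: "g \<in> S \<Longrightarrow> g \<in> fspan S"
  unfolding fspan_def
  by (rule CollectI, rule exI[of _ 1], rule exI[of _ "\<lambda>_. 1"], rule exI[of _ "\<lambda>_. g"]) auto

lemma fspan_zero: "\<omega> \<in> fspan S \<Longrightarrow> (\<forall>g\<in>S. g X = 0) \<Longrightarrow> \<omega> X = 0"
  unfolding fspan_def by (auto intro!: sum.neutral)

lemma fspan2: assumes "f \<in> fspan {\<alpha>, \<beta>}" shows "\<exists>s t. f = (\<lambda>x. s * \<alpha> x + t * \<beta> x)"
proof -
  from assms have "\<exists>(n::nat) c g. (\<forall>i<n. g i \<in> {\<alpha>,\<beta>}) \<and> f = (\<lambda>x. \<Sum>i<n. c i * g i x)"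
    unfolding fspan_def by simp
  then obtain n :: nat and c g where g: "\<forall>i<n. g i \<in> {\<alpha>,\<beta>}" and f: "f = (\<lambda>x. \<Sum>i<n. c i * (g i x::real))"
    by (elim exE conjE)
  have "f = (\<lambda>x. (\<Sum>i<n. if g i = \<alpha> then c i else 0) * \<alpha> x + (\<Sum>i<n. if g i = \<alpha> then 0 else c i) * \<beta> x)"
  proof
    fix x
    have "(\<Sum>i<n. c i * g i x) = (\<Sum>i<n. (if g i = \<alpha> then c i else 0) * \<alpha> x + (if g i = \<alpha> then 0 else c i) * \<beta> x)"
      by (rule sum.cong) (use g in auto)
    then show "f x = (\<Sum>i<n. if g i = \<alpha> then c i else 0) * \<alpha> x + (\<Sum>i<n. if g i = \<alpha> then 0 else c i) * \<beta> x"
      by (simp add: f sum.distrib sum_distrib_right)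
  qed
  then show ?thesis by blast
qed

lemma one_form_1: assumes "a \<in> V1" shows "one_form a \<in> bideg V1 V2 1 0"
proof -
  have "wedge ([a] @ []) \<in> {wedge (as @ bs) | as bs.
      length as = 1 \<and> set as \<subseteq> V1 \<and> length bs = 0 \<and> set bs \<subseteq> V2}"
    using assms by fastforce
  then have "wedge [a] \<in> bideg V1 V2 1 0" unfolding bideg_def by (simp add: in_fspan)
  moreover have "wedge [a] = one_form a" by (simp add: fun_eq_iff wedge1 one_form_def)
  ultimately show ?thesis by simp
qed

lemma one_form_2: assumes "b \<in> V2" shows "one_form b \<in> bideg V1 V2 0 1"
proof -
  have "wedge ([] @ [b]) \<in> {wedge (as @ bs) | as bs.
      length as = 0 \<and> set as \<subseteq> V1 \<and> length bs = 1 \<and> set bs \<subseteq> V2}"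
    using assms by fastforce
  then have "wedge [b] \<in> bideg V1 V2 0 1" unfolding bideg_def by (simp add: in_fspan)
  moreover have "wedge [b] = one_form b" by (simp add: fun_eq_iff wedge1 one_form_def)
  ultimately show ?thesis by simp
qed

lemma CE1: "CE_d br 1 (one_form f) X = - f (br (X 0) (X 1))"
proof -
  have "{0<..Suc 0} = {Suc 0}" by auto
  then show ?thesis by (simp add: CE_d_def one_form_def lessThan_Suc)
qed

lemma vanish:
  assumes "\<omega> \<in> bideg V1 V2 p q" "p \<ge> 1" "p + q = 2"
    and "\<forall>a\<in>V1. a (X 0) = 0 \<and> a (X 1) = 0"
  shows "\<omega> X = 0"
proof -
  have H: "g X = 0" if "g \<in> {wedge (as @ bs) | as bs.
      length as = p \<and> set as \<subseteq> V1 \<and> length bs = q \<and> set bs \<subseteq> V2}" for g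
  proof -
    from that obtain as bs where g: "g = wedge (as @ bs)" and l: "length as = p" "set as \<subseteq> V1"
      "length bs = q" by auto
    obtain a r where ar: "as = a # r" using l assms(2) by (cases as) auto
    have "length (r @ bs) = 1" using l ar assms(3) by auto
    then obtain b where "r @ bs = [b]" by (cases "r @ bs") auto
    then have "as @ bs = [a, b]" using ar by simp
    moreover have "a \<in> V1" using l ar by auto
    moreover have "a (X 0) = 0" "a (X 1) = 0" using assms(4) \<open>a \<in> V1\<close> by auto
    ultimately show ?thesis using g by (simp add: wedge2)
  qed
  show ?thesis by (rule fspan_zero[OF assms(1)[unfolded bideg_def]]) (use H in blast)
qed

lemma bideg20:
  assumes V: "V1 = fspan {\<alpha>, \<beta>}" and w: "\<omega> \<in> bideg V1 V2 2 0"
  shows "\<exists>K. \<forall>X. \<omega> X = K * (\<alpha> (X 0) * \<beta> (X 1) - \<alpha> (X 1) * \<beta> (X 0))"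
proof -
  define D where "D X = \<alpha> (X 0) * \<beta> (X 1) - \<alpha> (X 1) * \<beta> (X 0)" for X :: "nat \<Rightarrow> 'a"
  have gen: "\<exists>k. \<forall>X. g X = k * D X" if "g \<in> {wedge (as @ bs) | as bs.
      length as = 2 \<and> set as \<subseteq> V1 \<and> length bs = 0 \<and> set bs \<subseteq> V2}" for g
  proof -
    from that obtain as where g: "g = wedge as" and l: "length as = 2" "set as \<subseteq> V1" by auto
    obtain a1 a2 where as: "as = [a1, a2]" using l(1)
      by (metis One_nat_def Suc_1 length_0_conv length_Suc_conv)
    have "a1 \<in> fspan {\<alpha>,\<beta>}" "a2 \<in> fspan {\<alpha>,\<beta>}" using l as V by auto
    then obtain s1 t1 s2 t2 where a1: "a1 = (\<lambda>x. s1 * \<alpha> x + t1 * \<beta> x)"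
      and a2: "a2 = (\<lambda>x. s2 * \<alpha> x + t2 * \<beta> x)" using fspan2 by metis
    show ?thesis
      by (rule exI[of _ "s1 * t2 - t1 * s2"]) (simp add: g as a1 a2 wedge2 D_def algebra_simps)
  qed
  from w obtain n :: nat and c g where g: "\<forall>i<n. g i \<in> {wedge (as @ bs) | as bs.
      length as = 2 \<and> set as \<subseteq> V1 \<and> length bs = 0 \<and> set bs \<subseteq> V2}"
    and om: "\<omega> = (\<lambda>x. \<Sum>i<n. c i * (g i x::real))"
    unfolding bideg_def fspan_def mem_Collect_eq by (elim exE conjE)
  have "\<forall>i<n. \<exists>k. \<forall>X. g i X = k * D X" using g gen by blast
  then obtain k where k: "\<forall>i<n. \<forall>X. g i X = k i * D X" by metis
  have "\<forall>X. \<omega> X = (\<Sum>i<n. c i * k i) * D X"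
    by (simp add: om k sum_distrib_right mult.assoc)
  then show ?thesis unfolding D_def by blast
qed



theorem lemma4:
  fixes br :: "'a::euclidean_space \<Rightarrow> 'a \<Rightarrow> 'a"
    and V1 V2 :: "('a \<Rightarrow> real) set"
  assumes "lie_algebra br"
    and "nilpotent_lie br"
    and "DIM('a) = 6"
    and "coherent_splitting br V1 V2"
  shows "(\<forall>\<alpha>\<in>V1. CE_d br 1 (one_form \<alpha>) = (\<lambda>X. 0)) \<and> derived_length br \<in> {1, 2}"
proof -
  have bil: "bilinear br" using assms(1) unfolding lie_algebra_def by blast
  have ds: "dual_direct_sum V1 V2" and d2: "dual_dim2 V1"
    and coh: "\<forall>p q. \<forall>\<omega>\<in>bideg V1 V2 p q.
        \<exists>a\<in>bideg V1 V2 (p+1) q.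
        \<exists>b\<in>(if q = 0 then {\<lambda>X. 0} else bideg V1 V2 (p+2) (q-1)).
          CE_d br (p+q) \<omega> = (\<lambda>X. a X + b X)"
    using assms(4) unfolding coherent_splitting_def by blast+
  have lin: "linear \<gamma>" if "\<gamma> \<in> V1" for \<gamma>
    using ds that unfolding dual_direct_sum_def dual_subspace_def dual_space_def by blast
  obtain \<alpha> \<beta> where V: "V1 = fspan {\<alpha>, \<beta>}" using d2 unfolding dual_dim2_def by blast
  define D where "D x y = \<alpha> x * \<beta> y - \<alpha> y * \<beta> x" for x y :: 'a
  have A1: "\<exists>K. \<forall>x y. \<gamma> (br x y) = K * D x y" if g: "\<gamma> \<in> V1" for \<gamma>
  proof -
    have "one_form \<gamma> \<in> bideg V1 V2 1 0" using g by (rule one_form_1)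
    then obtain a b where a: "a \<in> bideg V1 V2 2 0" and b: "b \<in> {\<lambda>X. 0}"
      and e: "CE_d br 1 (one_form \<gamma>) = (\<lambda>X. a X + b X)"
      using bspec[OF coh[THEN spec[of _ 1], THEN spec[of _ 0]] \<open>one_form \<gamma> \<in> bideg V1 V2 1 0\<close>] by (auto simp: numeral_2_eq_2)
    obtain K where K: "\<forall>X. a X = K * (\<alpha> (X 0) * \<beta> (X 1) - \<alpha> (X 1) * \<beta> (X 0))"
      using bideg20[OF V a] by blast
    show ?thesis
    proof (intro exI allI)
      fix x y :: 'a
      define X where "X = (\<lambda>m::nat. if m = 0 then x else y)"
      have "CE_d br 1 (one_form \<gamma>) X = a X + b X" using e by simp
      then show "\<gamma> (br x y) = (-K) * D x y" using b K unfolding CE1 X_def D_def by simp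
    qed
  qed
  have aV: "\<alpha> \<in> V1" and bV: "\<beta> \<in> V1" using V by (auto intro: in_fspan)
  obtain c1 where c1: "\<forall>x y. \<alpha> (br x y) = c1 * D x y" using A1[OF aV] by blast
  obtain c2 where c2: "\<forall>x y. \<beta> (br x y) = c2 * D x y" using A1[OF bV] by blast
  have A0: "\<alpha> (br x0 y0) = 0 \<and> \<beta> (br x0 y0) = 0" for x0 y0
  proof (rule ccontr)
    assume H: "\<not> ?thesis"
    define D0 where "D0 = D x0 y0"
    have D0: "D0 \<noteq> 0" and cc: "c1 \<noteq> 0 \<or> c2 \<noteq> 0" using H c1 c2 unfolding D0_def by auto
    have "\<exists>u. \<alpha> u * c2 - \<beta> u * c1 \<noteq> 0"
    proof (rule ccontr)
      assume "\<not> ?thesis"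
      then have h: "\<alpha> x0 * c2 = \<beta> x0 * c1" "\<alpha> y0 * c2 = \<beta> y0 * c1" by auto
      have "c2 * D0 = 0"
      proof -
        have "c2 * D0 = (\<alpha> x0 * c2) * \<beta> y0 - (\<alpha> y0 * c2) * \<beta> x0"
          unfolding D0_def D_def by (simp add: algebra_simps)
        also have "\<dots> = 0" unfolding h by (simp add: algebra_simps)
        finally show ?thesis .
      qed
      moreover have "c1 * D0 = 0"
      proof -
        have "c1 * D0 = \<alpha> x0 * (\<beta> y0 * c1) - \<alpha> y0 * (\<beta> x0 * c1)"
          unfolding D0_def D_def by (simp add: algebra_simps)
        also have "\<dots> = 0" unfolding h[symmetric] by (simp add: algebra_simps)
        finally show ?thesis .
      qed
      ultimately show False using D0 cc by auto
    qed
    then obtain u where ku: "\<alpha> u * c2 - \<beta> u * c1 \<noteq> 0" by blast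
    define \<kappa> where "\<kappa> = \<alpha> u * c2 - \<beta> u * c1"
    define z where "z = rec_nat (br x0 y0) (\<lambda>n w. br u w)"
    have z0: "z 0 = br x0 y0" and zS: "z (Suc n) = br u (z n)" for n unfolding z_def by simp_all
    have coord: "\<alpha> (z n) = c1 * (D0 * \<kappa> ^ n) \<and> \<beta> (z n) = c2 * (D0 * \<kappa> ^ n)" for n
    proof (induction n)
      case 0 then show ?case using c1 c2 z0 unfolding D0_def by simp
    next
      case (Suc n)
      have "D u (z n) = D0 * \<kappa> ^ n * \<kappa>" using Suc unfolding D_def \<kappa>_def by (simp add: algebra_simps)
      then show ?case using c1 c2 zS by simp
    qed
    have zin: "z n \<in> lower_central br n" for n
    proof (induction n)
      case 0 then show ?case by simp
    next
      case (Suc n) then show ?case unfolding zS by (auto intro!: span_base)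
    qed
    obtain N where N: "lower_central br N = {0}" using assms(2) unfolding nilpotent_lie_def by blast
    have "z N = 0" using zin[of N] N by simp
    then have "c1 * (D0 * \<kappa> ^ N) = 0 \<and> c2 * (D0 * \<kappa> ^ N) = 0"
      using coord[of N] linear_0[OF lin[OF aV]] linear_0[OF lin[OF bV]] by simp
    then show False using D0 cc ku unfolding \<kappa>_def by simp
  qed
  have partA: "\<gamma> (br x y) = 0" if "\<gamma> \<in> V1" for \<gamma> x y
  proof -
    have "\<gamma> \<in> fspan {\<alpha>, \<beta>}" using that V by simp
    then obtain s t where "\<gamma> = (\<lambda>x. s * \<alpha> x + t * \<beta> x)" using fspan2 by blast
    then show ?thesis using A0 by simp
  qed
  have P1: "\<forall>\<alpha>\<in>V1. CE_d br 1 (one_form \<alpha>) = (\<lambda>X. 0)"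
    unfolding fun_eq_iff CE1 using partA by simp
  define h where "h = {x::'a. \<forall>\<gamma>\<in>V1. \<gamma> x = 0}"
  have partB: "br x y = 0" if x: "x \<in> h" and y: "y \<in> h" for x y
  proof -
    define f where "f = (\<lambda>z. inner z (br x y))"
    have "linear f" unfolding f_def using bounded_linear_inner_left bounded_linear.linear by blast
    then obtain a b where a: "a \<in> V1" and b: "b \<in> V2" and fab: "f = (\<lambda>x. a x + b x)"
      using ds unfolding dual_direct_sum_def dual_space_def by blast
    have "one_form b \<in> bideg V1 V2 0 1" using b by (rule one_form_2)
    then obtain A B where A: "A \<in> bideg V1 V2 1 1" and B: "B \<in> bideg V1 V2 2 0"
      and e: "CE_d br 1 (one_form b) = (\<lambda>X. A X + B X)"
      using bspec[OF coh[THEN spec[of _ 0], THEN spec[of _ 1]] \<open>one_form b \<in> bideg V1 V2 0 1\<close>] by (auto simp: numeral_2_eq_2)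
    define X where "X = (\<lambda>m::nat. if m = 0 then x else y)"
    have van: "\<forall>a\<in>V1. a (X 0) = 0 \<and> a (X 1) = 0" using x y unfolding h_def X_def by auto
    have "A X = 0" by (rule vanish[OF A _ _ van]) auto
    moreover have "B X = 0" by (rule vanish[OF B _ _ van]) auto
    moreover have "CE_d br 1 (one_form b) X = A X + B X" using e by simp
    ultimately have "b (br x y) = 0" unfolding CE1 X_def by simp
    then have "f (br x y) = 0" using partA[OF a] fab by simp
    then show ?thesis unfolding f_def by simp
  qed
  have sub: "subspace h"
    unfolding subspace_def h_def using lin by (auto simp: linear_0 linear_add linear_scale)
  have DS1: "derived_series br 1 \<subseteq> h"
    by (simp, rule span_minimal[OF _ sub]) (auto simp: h_def partA)
  have DS2: "derived_series br 2 = {0}"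
  proof -
    have "derived_series br 2 \<subseteq> {0}"
      unfolding numeral_2_eq_2 derived_series.simps(2)
      by (rule span_minimal) (use DS1 partB in auto)
    moreover have "0 \<in> derived_series br 2"
      unfolding numeral_2_eq_2 derived_series.simps(2) by (rule span_zero)
    ultimately show ?thesis by blast
  qed
  have nz: "derived_series br 0 \<noteq> {0}"
  proof -
    obtain b :: 'a where "b \<in> Basis" using nonempty_Basis by blast
    then have "b \<noteq> 0" by (rule nonzero_Basis)
    then show ?thesis by auto
  qed
  have "derived_length br \<le> 2" unfolding derived_length_def using DS2 by (rule Least_le)
  moreover have "derived_series br (derived_length br) = {0}"
    unfolding derived_length_def using DS2 by (rule LeastI)
  then have "derived_length br \<noteq> 0" using nz by metis
  ultimately have "derived_length br \<in> {1, 2}" by (simp add: le_Suc_eq numeral_2_eq_2)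
  then show ?thesis using P1 by blast
qed
end
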